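(* For the Proximal Bundle Method, suppose iteration $k$ is a descent step and iterations $k+1,\dots,k+T$ are all null steps, and let $G=\sup\{\|g_{t+1}\|: k\le t\le k+T\}>0$. For $k<t\le k+T+1$ define the model proximal gap $\widetilde\Delta_t:=f(x_{k+1})-\left(f_t(z_{t+1})+\frac{\rho_t}{2}\|z_{t+1}-x_{k+1}\|^2\right)$. Then for every $k<t\le k+T$, $$\widetilde\Delta_{t+1}\le\widetilde\Delta_t-\frac{(1-\beta)^2\rho_{k+1}\widetilde\Delta_t^2}{8G^2}.$$
   Context: Throughout, $f:\mathbb{R}^d\to\mathbb{R}$ is a proper closed convex function attaining its minimum $f^*=\inf f$ on the nonempty set $X^*=\{x: f(x)=f^*\}$; $\partial f(x)$ is the convex subdifferential. A subgradient oracle returns, for any $x$, the value $f(x)$ and some $g(x)\in\partial f(x)$. Proximal Bundle Method: fix $\beta\in(0,1)$, $x_0=z_0\in\mathbb{R}^d$, $g_0=g(x_0)$, and the initial model $f_0(x)=f(x_0)+\langle g_0,x-x_0\rangle$. At iteration $k\ge0$, given a convex model $f_k:\mathbb{R}^d\to\mathbb{R}$ and stepsize $\rho_k>0$, compute $z_{k+1}=\operatorname{argmin}_z f_k(z)+\frac{\rho_k}{2}\|z-x_k\|^2$. If $\beta(f(x_k)-f_k(z_{k+1}))\le f(x_k)-f(z_{k+1})$, iteration $k$ is a descent step and $x_{k+1}=z_{k+1}$; otherwise it is a null step and $x_{k+1}=x_k$. Then a new convex model $f_{k+1}$ and stepsize $\rho_{k+1}$ are chosen satisfying, with $g_{k+1}=g(z_{k+1})$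 and $s_{k+1}=\rho_k(x_k-z_{k+1})$: (1) $f_{k+1}(x)\le f(x)$ for all $x$; (2) $f_{k+1}(x)\ge f(z_{k+1})+\langle g_{k+1},x-z_{k+1}\rangle$ for all $x$; (3) if iteration $k$ was a null step, $f_{k+1}(x)\ge f_k(z_{k+1})+\langle s_{k+1},x-z_{k+1}\rangle$ for all $x$; (4) if iteration $k$ was a null step, $\rho_{k+1}\ge\rho_k$. *)

theory Defs
  imports "HOL-Analysis.Analysis"
begin

text \<open>Setting: f convex, real-valued on a Euclidean space (hence proper and closed),
attaining its minimum; g is a subgradient oracle.\<close>

definition is_subgradient :: "('a::euclidean_space \<Rightarrow> real) \<Rightarrow> 'a \<Rightarrow> 'a \<Rightarrow> bool" where
  "is_subgradient f x v \<longleftrightarrow> (\<forall>y. f x + inner v (y - x) \<le> f y)"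

definition pbm_descent ::
  "('a::euclidean_space \<Rightarrow> real) \<Rightarrow> real \<Rightarrow> (nat \<Rightarrow> 'a) \<Rightarrow> (nat \<Rightarrow> 'a)
     \<Rightarrow> (nat \<Rightarrow> 'a \<Rightarrow> real) \<Rightarrow> nat \<Rightarrow> bool" where
  "pbm_descent f \<beta> x z F k \<longleftrightarrow>
     \<beta> * (f (x k) - F k (z (Suc k))) \<le> f (x k) - f (z (Suc k))"

text \<open>A run of the Proximal Bundle Method: iterates x, proximal points z, models F,
stepsizes rho, with subgradients g (z (k+1)) = g_{k+1}.\<close>

definition pbm_run ::
  "('a::euclidean_space \<Rightarrow> real) \<Rightarrow> ('a \<Rightarrow> 'a) \<Rightarrow> real \<Rightarrow> (nat \<Rightarrow> 'a) \<Rightarrow> (nat \<Rightarrow> 'a)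
     \<Rightarrow> (nat \<Rightarrow> 'a \<Rightarrow> real) \<Rightarrow> (nat \<Rightarrow> real) \<Rightarrow> bool" where
  "pbm_run f g \<beta> x z F \<rho> \<longleftrightarrow>
     x 0 = z 0 \<and>
     F 0 = (\<lambda>y. f (x 0) + inner (g (x 0)) (y - x 0)) \<and>
     (\<forall>k. convex_on UNIV (F k)) \<and>
     (\<forall>k. \<rho> k > 0) \<and>
     (\<forall>k y. F k (z (Suc k)) + \<rho> k / 2 * (norm (z (Suc k) - x k))\<^sup>2
              \<le> F k y + \<rho> k / 2 * (norm (y - x k))\<^sup>2) \<and>
     (\<forall>k. x (Suc k) = (if pbm_descent f \<beta> x z F k then z (Suc k) else x k)) \<and>
     (\<forall>k y. F (Suc k) y \<le> f y) \<and>
     (\<forall>k y. F (Suc k) y \<ge> f (z (Suc k)) + inner (g (z (Suc k))) (y - z (Suc k))) \<and>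
     (\<forall>k y. \<not> pbm_descent f \<beta> x z F k \<longrightarrow>
        F (Suc k) y \<ge> F k (z (Suc k)) + inner (\<rho> k *\<^sub>R (x k - z (Suc k))) (y - z (Suc k))) \<and>
     (\<forall>k. \<not> pbm_descent f \<beta> x z F k \<longrightarrow> \<rho> (Suc k) \<ge> \<rho> k)"

end

theory Submission
  imports Defs
begin


lemma step_lemma:
  fixes x z z' g :: "'a::real_inner" and Fa Fb :: "'a \<Rightarrow> real"
  assumes Pmin: "\<forall>y. Fa z + rb/2 * (norm (z - x))\<^sup>2 \<le> Fa y + rb/2 * (norm (y - x))\<^sup>2"
    and null: "\<not> (\<beta> * (fx - Fa z) \<le> fx - fz)"
    and F1x: "Fa x \<le> fx"
    and cut: "\<forall>y. Fb y \<ge> fz + inner g (y - z)"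
    and agg: "\<forall>y. Fb y \<ge> Fa z + inner (rb *\<^sub>R (x - z)) (y - z)"
    and F2x: "Fb x \<le> fx"
    and gG: "norm g \<le> G" and Gp: "G > 0" and ra: "0 < ra" "ra \<le> rb" and rc: "rb \<le> rc"
    and b1: "\<beta> < 1" and b0: "0 < \<beta>"
    and hD: "Da \<le> G\<^sup>2 / (2 * ra)"
    and D1d: "Da = fx - (Fa z + rb/2 * (norm (z - x))\<^sup>2)"
    and D2d: "Db = fx - (Fb z' + rc/2 * (norm (z' - x))\<^sup>2)"
  shows "Db \<le> Da - (1 - \<beta>)\<^sup>2 * ra * Da\<^sup>2 / (8 * G\<^sup>2)"
proof -
  have r1p: "rb > 0" using ra by linarith
  define d where "d = z - x"
  define h where "h = z' - z"
  define P where "P = Fa z + rb/2 * (norm d)\<^sup>2"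
  define \<delta> where "\<delta> = fz - Fa z"
  have D1P: "Da = fx - P" using D1d P_def d_def by simp
  have D1nn: "0 \<le> Da" using Pmin[rule_format, of x] F1x D1P P_def d_def by simp
  have "Fa z + rb * (norm d)\<^sup>2 \<le> fx"
  proof -
    have "Fa z + inner (rb *\<^sub>R (x - z)) (x - z) \<le> fx" using agg F2x by (meson order_trans)
    moreover have "inner (x - z) (x - z) = (norm d)\<^sup>2"
      by (simp add: d_def power2_norm_eq_inner[symmetric] norm_minus_commute)
    ultimately show ?thesis by (simp add: inner_scaleR_left)
  qed
  hence dbound: "rb * (norm d)\<^sup>2 \<le> 2 * Da" using D1P P_def by simp
  have delta: "\<delta> \<ge> (1 - \<beta>) * Da"
  proof -
    have "fx - Fa z \<ge> Da" using D1P P_def r1p by simp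
    hence "(1-\<beta>) * (fx - Fa z) \<ge> (1-\<beta>) * Da" using b1 by (intro mult_left_mono) auto
    thus ?thesis using null \<delta>_def by (simp add: algebra_simps)
  qed
  define v where "v = g + rb *\<^sub>R d"
  have "norm v \<le> norm g + rb * norm d" unfolding v_def using r1p
    by (metis abs_of_pos norm_scaleR norm_triangle_ineq)
  hence "(norm v)\<^sup>2 \<le> (norm g + rb * norm d)\<^sup>2" by (simp add: power_mono)
  also have "\<dots> \<le> 2 * (norm g)\<^sup>2 + 2 * (rb * norm d)\<^sup>2"
  proof -
    have "0 \<le> (norm g - rb * norm d)\<^sup>2" by simp
    thus ?thesis unfolding power2_sum power2_diff by linarith
  qed
  finally have vb: "(norm v)\<^sup>2 \<le> 2 * (norm g)\<^sup>2 + 2 * rb * (rb * (norm d)\<^sup>2)"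
    by (simp add: power2_eq_square algebra_simps)
  have gb: "(norm g)\<^sup>2 / rb \<le> G\<^sup>2 / ra"
  proof -
    have "(norm g)\<^sup>2 \<le> G\<^sup>2" using gG by (simp add: power_mono)
    thus ?thesis using ra r1p by (meson frac_le zero_le_power2 less_le_trans order_trans)
  qed
  have vb2: "(norm v)\<^sup>2 / (2 * rb) \<le> 2 * G\<^sup>2 / ra"
  proof -
    have "(norm v)\<^sup>2 / (2 * rb) \<le> (2 * (norm g)\<^sup>2 + 2 * rb * (rb * (norm d)\<^sup>2)) / (2 * rb)"
      using vb r1p by (simp add: divide_right_mono)
    also have "\<dots> = (norm g)\<^sup>2 / rb + rb * (norm d)\<^sup>2" using r1p by (simp add: field_simps)
    also have "\<dots> \<le> G\<^sup>2 / ra + 2 * Da" using gb dbound by simp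
    also have "\<dots> \<le> 2 * G\<^sup>2 / ra" using hD ra by (simp add: field_simps)
    finally show ?thesis .
  qed
  define K where "K = (1 - \<beta>) * Da"
  have Knn: "0 \<le> K" using K_def b1 D1nn by simp
  define lam where "lam = ra * K / (4 * G\<^sup>2)"
  have lnn: "0 \<le> lam" using lam_def Knn ra by simp
  have l1: "lam \<le> 1"
  proof -
    have "K \<le> Da" using K_def D1nn b0 by (simp add: algebra_simps) (metis add_increasing2 mult_nonneg_nonneg less_imp_le order_refl)
    hence "K \<le> G\<^sup>2 / (2 * ra)" using hD by linarith
    hence "ra * K \<le> ra * (G\<^sup>2 / (2 * ra))" by (rule mult_left_mono) (use ra in auto)
    also have "\<dots> = G\<^sup>2 / 2" using ra by simp
    also have "\<dots> \<le> 4 * G\<^sup>2" by simp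
    finally show ?thesis using lam_def Gp by simp
  qed
  have zx: "z' - x = h + d" using h_def d_def by simp
  have nz: "(norm (z' - x))\<^sup>2 = (norm h)\<^sup>2 + 2 * inner d h + (norm d)\<^sup>2"
    unfolding zx by (simp add: power2_norm_eq_inner inner_add_left inner_add_right inner_commute)
  have ia: "inner (rb *\<^sub>R (x - z)) (z' - z) = - rb * inner d h"
    proof - have "inner (x - z) (z' - z) = - inner (z - x) (z' - z)" by (metis inner_minus_left minus_diff_eq) thus ?thesis by (simp add: d_def h_def) qed
  have iv: "inner v h = inner g h + rb * inner d h" by (simp add: v_def inner_add_left)
  have F2a: "Fb z' \<ge> Fa z - rb * inner d h" using agg[rule_format, of z'] ia by simp
  have F2b: "Fb z' \<ge> fz + inner g h" using cut[rule_format, of z'] h_def by simp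
  have F2c: "Fb z' \<ge> (1 - lam) * (Fa z - rb * inner d h) + lam * (fz + inner g h)"
  proof -
    have "(1 - lam) * (Fa z - rb * inner d h) \<le> (1 - lam) * Fb z'" using F2a l1 by (simp add: mult_left_mono)
    moreover have "lam * (fz + inner g h) \<le> lam * Fb z'" using F2b lnn by (simp add: mult_left_mono)
    ultimately show ?thesis by (simp add: algebra_simps)
  qed
  have r2t: "rc/2 * (norm (z' - x))\<^sup>2 \<ge> rb/2 * (norm (z' - x))\<^sup>2" using rc by (simp add: mult_right_mono)
  have low: "Fb z' + rc/2 * (norm (z' - x))\<^sup>2 \<ge> P + lam * \<delta> + lam * inner v h + rb/2 * (norm h)\<^sup>2"
  proof -
    have "Fb z' + rc/2 * (norm (z' - x))\<^sup>2 \<ge> (1 - lam) * (Fa z - rb * inner d h) + lam * (fz + inner g h)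
          + rb/2 * ((norm h)\<^sup>2 + 2 * inner d h + (norm d)\<^sup>2)"
      using F2c r2t nz by simp
    moreover have "(1 - lam) * (Fa z - rb * inner d h) + lam * (fz + inner g h)
          + rb/2 * ((norm h)\<^sup>2 + 2 * inner d h + (norm d)\<^sup>2) = P + lam * \<delta> + lam * inner v h + rb/2 * (norm h)\<^sup>2"
      by (simp add: P_def \<delta>_def iv algebra_simps)
    ultimately show ?thesis by simp
  qed
  have sq: "lam * inner v h + rb/2 * (norm h)\<^sup>2 \<ge> - (lam\<^sup>2 * ((norm v)\<^sup>2 / (2 * rb)))"
  proof -
    have cs: "lam * inner v h \<ge> - (lam * (norm v * norm h))"
    proof -
      have "- (norm v * norm h) \<le> inner v h" using Cauchy_Schwarz_ineq2[of v h] by linarith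
      hence "lam * (- (norm v * norm h)) \<le> lam * inner v h" using lnn by (rule mult_left_mono)
      thus ?thesis by simp
    qed
    have "0 \<le> (rb * norm h - lam * norm v)\<^sup>2" by simp
    hence "0 \<le> rb\<^sup>2 * (norm h)\<^sup>2 - 2 * rb * (lam * (norm v * norm h)) + lam\<^sup>2 * (norm v)\<^sup>2"
      by (simp add: power2_eq_square algebra_simps)
    hence "0 \<le> (rb\<^sup>2 * (norm h)\<^sup>2 - 2 * rb * (lam * (norm v * norm h)) + lam\<^sup>2 * (norm v)\<^sup>2) / (2 * rb)"
      using r1p by simp
    hence "0 \<le> rb/2 * (norm h)\<^sup>2 - lam * (norm v * norm h) + lam\<^sup>2 * ((norm v)\<^sup>2 / (2 * rb))"
      using r1p by (simp add: field_simps power2_eq_square)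
    thus ?thesis using cs by linarith
  qed
  have "Db \<le> Da - lam * \<delta> + lam\<^sup>2 * ((norm v)\<^sup>2 / (2 * rb))"
    using low sq D2d D1P by linarith
  also have "\<dots> \<le> Da - lam * K + lam\<^sup>2 * (2 * G\<^sup>2 / ra)"
  proof -
    have "lam * K \<le> lam * \<delta>" using delta K_def lnn by (simp add: mult_left_mono)
    moreover have "lam\<^sup>2 * ((norm v)\<^sup>2 / (2 * rb)) \<le> lam\<^sup>2 * (2 * G\<^sup>2 / ra)" using vb2 by (rule mult_left_mono) simp
    ultimately show ?thesis by linarith
  qed
  also have "\<dots> = Da - (1 - \<beta>)\<^sup>2 * ra * Da\<^sup>2 / (8 * G\<^sup>2)"
  proof -
    have "lam * K = ra * K\<^sup>2 / (4 * G\<^sup>2)" by (simp add: lam_def power2_eq_square)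
    moreover have "lam\<^sup>2 * (2 * G\<^sup>2 / ra) = ra * K\<^sup>2 / (8 * G\<^sup>2)"
      using Gp ra by (simp add: lam_def power_divide power_mult_distrib field_simps power2_eq_square)
    moreover have "K\<^sup>2 = (1 - \<beta>)\<^sup>2 * Da\<^sup>2" by (simp add: K_def power_mult_distrib)
    ultimately show ?thesis by (simp add: field_simps)
  qed
  finally show ?thesis .
qed


lemma quad_lb:
  fixes g h :: "'a::real_inner"
  assumes r: "(r::real) > 0"
  shows "inner g h + r/2 * (norm h)\<^sup>2 \<ge> - ((norm g)\<^sup>2 / (2 * r))"
proof -
  have cs: "- (norm g * norm h) \<le> inner g h" using Cauchy_Schwarz_ineq2[of g h] by linarith
  have "0 \<le> (r * norm h - norm g)\<^sup>2" by simp
  hence "0 \<le> r\<^sup>2 * (norm h)\<^sup>2 - 2 * r * (norm g * norm h) + (norm g)\<^sup>2"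
    by (simp add: power2_eq_square algebra_simps)
  hence "0 \<le> (r\<^sup>2 * (norm h)\<^sup>2 - 2 * r * (norm g * norm h) + (norm g)\<^sup>2) / (2 * r)"
    using r by simp
  hence "0 \<le> r/2 * (norm h)\<^sup>2 - (norm g * norm h) + (norm g)\<^sup>2 / (2 * r)"
    using r by (simp add: field_simps power2_eq_square)
  thus ?thesis using cs by linarith
qed

theorem mainTheorem10:
  fixes f :: "'a::euclidean_space \<Rightarrow> real" and g :: "'a \<Rightarrow> 'a"
    and \<beta> :: real and x z :: "nat \<Rightarrow> 'a" and F :: "nat \<Rightarrow> 'a \<Rightarrow> real"
    and \<rho> :: "nat \<Rightarrow> real" and k T :: nat and G :: real
    and \<Delta> :: "nat \<Rightarrow> real"
  assumes fconv: "convex_on UNIV f"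
    and fmin: "\<exists>xs. \<forall>y. f xs \<le> f y"
    and subgr: "\<And>y. is_subgradient f y (g y)"
    and beta: "0 < \<beta>" "\<beta> < 1"
    and run: "pbm_run f g \<beta> x z F \<rho>"
    and desc: "pbm_descent f \<beta> x z F k"
    and nulls: "\<And>t. k < t \<Longrightarrow> t \<le> k + T \<Longrightarrow> \<not> pbm_descent f \<beta> x z F t"
    and G_def: "G = (SUP t\<in>{k..k+T}. norm (g (z (Suc t))))"
    and G_pos: "G > 0"
    and Delta_def: "\<And>t. \<Delta> t = f (x (Suc k)) -
          (F t (z (Suc t)) + \<rho> t / 2 * (norm (z (Suc t) - x (Suc k)))\<^sup>2)"
  shows "\<forall>t. k < t \<and> t \<le> k + T \<longrightarrow>
           \<Delta> (Suc t) \<le> \<Delta> t - (1 - \<beta>)\<^sup>2 * \<rho> (Suc k) * (\<Delta> t)\<^sup>2 / (8 * G\<^sup>2)"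
proof -
  have rpos: "\<And>k. \<rho> k > 0"
    and Pmin: "\<And>k. \<forall>y. F k (z (Suc k)) + \<rho> k / 2 * (norm (z (Suc k) - x k))\<^sup>2
              \<le> F k y + \<rho> k / 2 * (norm (y - x k))\<^sup>2"
    and xs: "\<And>k. x (Suc k) = (if pbm_descent f \<beta> x z F k then z (Suc k) else x k)"
    and Fle: "\<And>k y. F (Suc k) y \<le> f y"
    and cut: "\<And>k. \<forall>y. F (Suc k) y \<ge> f (z (Suc k)) + inner (g (z (Suc k))) (y - z (Suc k))"
    and agg: "\<And>k. \<not> pbm_descent f \<beta> x z F k \<Longrightarrow> \<forall>y.
        F (Suc k) y \<ge> F k (z (Suc k)) + inner (\<rho> k *\<^sub>R (x k - z (Suc k))) (y - z (Suc k))"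
    and rm: "\<And>k. \<not> pbm_descent f \<beta> x z F k \<Longrightarrow> \<rho> (Suc k) \<ge> \<rho> k"
    using run unfolding pbm_run_def by auto
  define X where "X = x (Suc k)"
  have xX: "X = z (Suc k)" using xs[of k] desc X_def by simp
  have xeq: "\<And>n. n \<le> T \<Longrightarrow> x (Suc k + n) = X"
  proof -
    fix n show "n \<le> T \<Longrightarrow> x (Suc k + n) = X"
    proof (induction n)
      case 0 thus ?case using X_def by simp
    next
      case (Suc n)
      have "\<not> pbm_descent f \<beta> x z F (Suc k + n)" using nulls Suc.prems by simp
      thus ?case using xs[of "Suc k + n"] Suc by simp
    qed
  qed
  have rmono: "\<And>n. n \<le> T \<Longrightarrow> \<rho> (Suc k + n) \<ge> \<rho> (Suc k)"
  proof -
    fix n show "n \<le> T \<Longrightarrow> \<rho> (Suc k + n) \<ge> \<rho> (Suc k)"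
    proof (induction n)
      case 0 thus ?case by simp
    next
      case (Suc n)
      have "\<not> pbm_descent f \<beta> x z F (Suc k + n)" using nulls Suc.prems by simp
      thus ?case using rm[of "Suc k + n"] Suc by simp
    qed
  qed
  have gb: "\<And>t. t \<in> {k..k+T} \<Longrightarrow> norm (g (z (Suc t))) \<le> G"
    unfolding G_def by (rule cSUP_upper) auto
  have key: "\<And>n. n < T \<Longrightarrow> \<Delta> (Suc k + n) \<le> G\<^sup>2 / (2 * \<rho> (Suc k)) \<Longrightarrow>
      \<Delta> (Suc (Suc k + n)) \<le> \<Delta> (Suc k + n) - (1 - \<beta>)\<^sup>2 * \<rho> (Suc k) * (\<Delta> (Suc k + n))\<^sup>2 / (8 * G\<^sup>2)"
  proof -
    fix n assume n: "n < T" and hD: "\<Delta> (Suc k + n) \<le> G\<^sup>2 / (2 * \<rho> (Suc k))"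
    define t where "t = Suc k + n"
    have xt: "x t = X" using xeq[of n] n t_def by simp
    have nt: "\<not> pbm_descent f \<beta> x z F t" using nulls n t_def by simp
    have ts: "t = Suc (k + n)" using t_def by simp
    show "\<Delta> (Suc (Suc k + n)) \<le> \<Delta> (Suc k + n) - (1 - \<beta>)\<^sup>2 * \<rho> (Suc k) * (\<Delta> (Suc k + n))\<^sup>2 / (8 * G\<^sup>2)"
      unfolding t_def[symmetric]
    proof (rule step_lemma[where x = X and z = "z (Suc t)" and z' = "z (Suc (Suc t))"
          and g = "g (z (Suc t))" and Fa = "F t" and Fb = "F (Suc t)" and rb = "\<rho> t"
          and rc = "\<rho> (Suc t)" and fx = "f X" and fz = "f (z (Suc t))"])
      show "\<forall>y. F t (z (Suc t)) + \<rho> t / 2 * (norm (z (Suc t) - X))\<^sup>2 \<le> F t y + \<rho> t / 2 * (norm (y - X))\<^sup>2"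
        using Pmin[of t] xt by simp
      show "\<not> \<beta> * (f X - F t (z (Suc t))) \<le> f X - f (z (Suc t))"
        using nt xt unfolding pbm_descent_def by simp
      show "F t X \<le> f X" using Fle ts by simp
      show "\<forall>y. f (z (Suc t)) + inner (g (z (Suc t))) (y - z (Suc t)) \<le> F (Suc t) y" using cut by simp
      show "\<forall>y. F t (z (Suc t)) + inner (\<rho> t *\<^sub>R (X - z (Suc t))) (y - z (Suc t)) \<le> F (Suc t) y"
        using agg[OF nt] xt by simp
      show "F (Suc t) X \<le> f X" using Fle by simp
      show "norm (g (z (Suc t))) \<le> G" using gb[of t] t_def n by simp
      show "G > 0" by (rule G_pos)
      show "0 < \<rho> (Suc k)" by (rule rpos)
      show "\<rho> (Suc k) \<le> \<rho> t" using rmono[of n] n t_def by simp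
      show "\<rho> t \<le> \<rho> (Suc t)" using rm[OF nt] .
      show "\<beta> < 1" "0 < \<beta>" using beta by auto
      show "\<Delta> t \<le> G\<^sup>2 / (2 * \<rho> (Suc k))" using hD t_def by simp
      show "\<Delta> t = f X - (F t (z (Suc t)) + \<rho> t / 2 * (norm (z (Suc t) - X))\<^sup>2)"
        using Delta_def X_def by simp
      show "\<Delta> (Suc t) = f X - (F (Suc t) (z (Suc (Suc t))) + \<rho> (Suc t) / 2 * (norm (z (Suc (Suc t)) - X))\<^sup>2)"
        using Delta_def X_def by simp
    qed
  qed
  have Dbound: "\<And>n. n < T \<Longrightarrow> \<Delta> (Suc k + n) \<le> G\<^sup>2 / (2 * \<rho> (Suc k))"
  proof -
    fix n show "n < T \<Longrightarrow> \<Delta> (Suc k + n) \<le> G\<^sup>2 / (2 * \<rho> (Suc k))"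
    proof (induction n)
      case 0
      define h where "h = z (Suc (Suc k)) - X"
      have c: "F (Suc k) (z (Suc (Suc k))) \<ge> f X + inner (g X) h"
        using cut[of k] xX h_def by simp
      have q: "inner (g X) h + \<rho> (Suc k) / 2 * (norm h)\<^sup>2 \<ge> - ((norm (g X))\<^sup>2 / (2 * \<rho> (Suc k)))"
        by (rule quad_lb) (rule rpos)
      have "norm (g X) \<le> G" using gb[of k] xX by simp
      hence "(norm (g X))\<^sup>2 \<le> G\<^sup>2" by (simp add: power_mono)
      hence "(norm (g X))\<^sup>2 / (2 * \<rho> (Suc k)) \<le> G\<^sup>2 / (2 * \<rho> (Suc k))"
        using rpos[of "Suc k"] by (simp add: divide_right_mono)
      moreover have "\<Delta> (Suc k) = f X - (F (Suc k) (z (Suc (Suc k))) + \<rho> (Suc k) / 2 * (norm h)\<^sup>2)"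
        using Delta_def X_def h_def by simp
      ultimately show ?case using c q by simp
    next
      case (Suc n)
      have "\<Delta> (Suc k + n) \<le> G\<^sup>2 / (2 * \<rho> (Suc k))" using Suc by simp
      hence "\<Delta> (Suc (Suc k + n)) \<le> \<Delta> (Suc k + n) - (1 - \<beta>)\<^sup>2 * \<rho> (Suc k) * (\<Delta> (Suc k + n))\<^sup>2 / (8 * G\<^sup>2)"
        using key Suc.prems by simp
      moreover have "0 \<le> (1 - \<beta>)\<^sup>2 * \<rho> (Suc k) * (\<Delta> (Suc k + n))\<^sup>2 / (8 * G\<^sup>2)"
        using rpos[of "Suc k"] by simp
      ultimately show ?case using \<open>\<Delta> (Suc k + n) \<le> _\<close> by simp
    qed
  qed
  show ?thesis
  proof (intro allI impI)
    fix t assume t: "k < t \<and> t \<le> k + T"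
    define n where "n = t - Suc k"
    have tn: "t = Suc k + n" "n < T" using t n_def by auto
    show "\<Delta> (Suc t) \<le> \<Delta> t - (1 - \<beta>)\<^sup>2 * \<rho> (Suc k) * (\<Delta> t)\<^sup>2 / (8 * G\<^sup>2)"
      using key[OF tn(2) Dbound[OF tn(2)]] tn(1) by simp
  qed
qed

end
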